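(* Let $N=(V,E)$ be a tree-child phylogenetic network such that no two parents of a hybrid node are connected by a path. For all nodes $u,v\in V$, the following are equivalent: (i) $C(u)=C(v)$; (ii) $u=v$, or $\{u,v\}$ consists of a hybrid node and its only child.
   Context: A DAG is labeled in a finite set $S$ if its leaves (out-degree 0) are bijectively labeled by $S$. A tree node has in-degree at most 1; a hybrid node has in-degree greater than 1; a tree child of a node is a child that is a tree node. A tree-child phylogenetic network is a rooted DAG labeled in $S$ in which every non-leaf node has at least one tree child, no tree node has out-degree 1, and every hybrid node has out-degree exactly 1. The condition that no two parents of a hybrid node are connected by a path means: if $u_1,u_2$ are the parents of a hybrid node, there is no path $u_1\rightsquigarrow u_2$ nor $u_2\rightsquigarrow u_1$. $C(u)$ (the cluster of $u$) is the set of leaves that are descendants of $u$ (reachable from $u$ by a path, including $u$ itself if it is a leaf). *)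

theory Defs
  imports Main
begin

definition children :: "('a \<times> 'a) set \<Rightarrow> 'a \<Rightarrow> 'a set" where
  "children E u = {v. (u, v) \<in> E}"

definition parents :: "('a \<times> 'a) set \<Rightarrow> 'a \<Rightarrow> 'a set" where
  "parents E v = {u. (u, v) \<in> E}"

definition indeg :: "('a \<times> 'a) set \<Rightarrow> 'a \<Rightarrow> nat" where
  "indeg E v = card (parents E v)"

definition outdeg :: "('a \<times> 'a) set \<Rightarrow> 'a \<Rightarrow> nat" where
  "outdeg E v = card (children E v)"

definition is_leaf :: "('a \<times> 'a) set \<Rightarrow> 'a \<Rightarrow> bool" where
  "is_leaf E v \<longleftrightarrow> outdeg E v = 0"

definition leaves :: "'a set \<Rightarrow> ('a \<times> 'a) set \<Rightarrow> 'a set" where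
  "leaves V E = {v \<in> V. is_leaf E v}"

definition tree_node :: "('a \<times> 'a) set \<Rightarrow> 'a \<Rightarrow> bool" where
  "tree_node E v \<longleftrightarrow> indeg E v \<le> 1"

definition hybrid_node :: "('a \<times> 'a) set \<Rightarrow> 'a \<Rightarrow> bool" where
  "hybrid_node E v \<longleftrightarrow> indeg E v > 1"

definition tree_child :: "('a \<times> 'a) set \<Rightarrow> 'a \<Rightarrow> 'a \<Rightarrow> bool" where
  "tree_child E u v \<longleftrightarrow> (u, v) \<in> E \<and> tree_node E v"

definition is_dag :: "'a set \<Rightarrow> ('a \<times> 'a) set \<Rightarrow> bool" where
  "is_dag V E \<longleftrightarrow> finite V \<and> E \<subseteq> V \<times> V \<and> acyclic E"

definition rooted_dag :: "'a set \<Rightarrow> ('a \<times> 'a) set \<Rightarrow> bool" where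
  "rooted_dag V E \<longleftrightarrow> is_dag V E \<and>
     (\<exists>r \<in> V. indeg E r = 0 \<and> (\<forall>v \<in> V. (r, v) \<in> E\<^sup>*))"

definition labeled_in :: "'a set \<Rightarrow> ('a \<times> 'a) set \<Rightarrow> ('a \<Rightarrow> 's) \<Rightarrow> 's set \<Rightarrow> bool" where
  "labeled_in V E lab S \<longleftrightarrow> bij_betw lab (leaves V E) S"

definition tree_child_network ::
  "'a set \<Rightarrow> ('a \<times> 'a) set \<Rightarrow> ('a \<Rightarrow> 's) \<Rightarrow> 's set \<Rightarrow> bool" where
  "tree_child_network V E lab S \<longleftrightarrow>
     rooted_dag V E \<and> labeled_in V E lab S \<and>
     (\<forall>u \<in> V. \<not> is_leaf E u \<longrightarrow> (\<exists>v. tree_child E u v)) \<and>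
     (\<forall>u \<in> V. tree_node E u \<longrightarrow> outdeg E u \<noteq> 1) \<and>
     (\<forall>u \<in> V. hybrid_node E u \<longrightarrow> outdeg E u = 1)"

definition hybrid_parents_unconnected :: "'a set \<Rightarrow> ('a \<times> 'a) set \<Rightarrow> bool" where
  "hybrid_parents_unconnected V E \<longleftrightarrow>
     (\<forall>h \<in> V. hybrid_node E h \<longrightarrow>
        (\<forall>u1 \<in> parents E h. \<forall>u2 \<in> parents E h. u1 \<noteq> u2 \<longrightarrow>
           (u1, u2) \<notin> E\<^sup>* \<and> (u2, u1) \<notin> E\<^sup>*))"

definition cluster :: "'a set \<Rightarrow> ('a \<times> 'a) set \<Rightarrow> 'a \<Rightarrow> 'a set" where
  "cluster V E u = {x \<in> leaves V E. (u, x) \<in> E\<^sup>*}"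

end

theory Submission
  imports Defs
begin

definition TE :: "('a \<times> 'a) set \<Rightarrow> ('a \<times> 'a) set" where
  "TE E = {(x,y). (x,y) \<in> E \<and> tree_node E y}"

lemma TE_sub: "TE E \<subseteq> E" by (auto simp: TE_def)

lemma TE_trancl_sub: "(a,b) \<in> (TE E)\<^sup>+ \<Longrightarrow> (a,b) \<in> E\<^sup>+"
  using trancl_mono TE_sub by blast

lemma TE_rtrancl_sub: "(a,b) \<in> (TE E)\<^sup>* \<Longrightarrow> (a,b) \<in> E\<^sup>*"
  using rtrancl_mono TE_sub by blast

locale tcn =
  fixes V :: "'a set" and E :: "('a \<times> 'a) set" and lab :: "'a \<Rightarrow> 's" and S :: "'s set"
  assumes net: "tree_child_network V E lab S"
    and hpu: "hybrid_parents_unconnected V E"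
begin

lemma finV: "finite V" and EV: "E \<subseteq> V \<times> V" and acyc: "acyclic E"
  using net by (auto simp: tree_child_network_def rooted_dag_def is_dag_def)

lemma finE: "finite E"
  using finV EV finite_subset by blast

lemma fin_children: "finite (children E u)"
proof -
  have "children E u \<subseteq> snd ` E" by (force simp: children_def)
  thus ?thesis using finE finite_subset by blast
qed

lemma fin_parents: "finite (parents E u)"
proof -
  have "parents E u \<subseteq> fst ` E" by (force simp: parents_def)
  thus ?thesis using finE finite_subset by blast
qed

lemma inV: "(x,y) \<in> E \<Longrightarrow> x \<in> V \<and> y \<in> V" using EV by blast

lemma par_unique:
  assumes "tree_node E c" "(p,c) \<in> E" "(q,c) \<in> E" shows "p = q"
proof (rule ccontr)
  assume "p \<noteq> q"
  hence "card {p,q} = 2" by simp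
  moreover have "{p,q} \<subseteq> parents E c" using assms by (auto simp: parents_def)
  ultimately have "card (parents E c) \<ge> 2" using card_mono fin_parents by metis
  thus False using assms(1) by (simp add: tree_node_def indeg_def)
qed

lemma two_par_hybrid:
  assumes "(p,c) \<in> E" "(q,c) \<in> E" "p \<noteq> q" shows "hybrid_node E c"
proof -
  have "\<not> tree_node E c" using par_unique[OF _ assms(1,2)] assms(3) by blast
  thus ?thesis by (simp add: tree_node_def hybrid_node_def)
qed

lemma nocyc: "(x,y) \<in> E\<^sup>+ \<Longrightarrow> (y,x) \<in> E\<^sup>* \<Longrightarrow> False"
  using acyc by (meson acyclic_def trancl_rtrancl_trancl)

lemma ancestor:
  assumes "(a,b) \<in> (TE E)\<^sup>*" "(y,b) \<in> E\<^sup>*"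
  shows "(y,a) \<in> E\<^sup>* \<or> ((a,y) \<in> (TE E)\<^sup>+ \<and> (y,b) \<in> (TE E)\<^sup>*)"
  using assms
proof (induction arbitrary: y rule: rtrancl_induct)
  case base
  then show ?case by simp
next
  case (step b c)
  show ?case
  proof (cases "y = c")
    case True
    have "(a,c) \<in> (TE E)\<^sup>+" using step.hyps by (simp add: rtrancl_into_trancl1)
    then show ?thesis using True by simp
  next
    case False
    with step.prems have "(y,c) \<in> E\<^sup>+" by (metis rtranclD)
    then obtain p where p: "(y,p) \<in> E\<^sup>*" "(p,c) \<in> E" using tranclD2 by metis
    have "p = b" using par_unique[OF _ p(2)] step.hyps(2) by (auto simp: TE_def)
    have "(y,b) \<in> E\<^sup>*" using p \<open>p = b\<close> by simp
    from step.IH[OF this] step.hyps(2) show ?thesis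
      by (meson rtrancl.rtrancl_into_rtrancl)
  qed
qed

lemma tp_leaf:
  assumes "a \<in> V" shows "\<exists>x \<in> leaves V E. (a,x) \<in> (TE E)\<^sup>*"
proof -
  have wf: "wf (E\<inverse>)" using finite_acyclic_wf_converse finE acyc by blast
  show ?thesis using assms
  proof (induction a rule: wf_induct[OF wf])
    case (1 a)
    show ?case
    proof (cases "is_leaf E a")
      case True
      then show ?thesis using 1 by (auto simp: leaves_def)
    next
      case False
      then obtain c where c: "tree_child E a c"
        using net 1(2) by (auto simp: tree_child_network_def)
      hence "(a,c) \<in> TE E" "c \<in> V" using inV by (auto simp: tree_child_def TE_def)
      moreover have "(c,a) \<in> E\<inverse>" using c by (auto simp: tree_child_def)
      ultimately show ?thesis using 1(1) by (meson converse_rtrancl_into_rtrancl)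
    qed
  qed
qed

lemma no_shortcut:
  assumes "(a,c) \<in> E" "(a,d) \<in> E" "d \<noteq> c" "(d,c) \<in> E\<^sup>+" shows False
proof -
  obtain p where p: "(d,p) \<in> E\<^sup>*" "(p,c) \<in> E" using tranclD2 assms(4) by metis
  have "p \<noteq> a" using p(1) assms(2) nocyc by blast
  hence h: "hybrid_node E c" using two_par_hybrid assms(1) p(2) by blast
  have "(a,p) \<in> E\<^sup>*" using assms(2) p(1) by (meson converse_rtrancl_into_rtrancl)
  moreover have "c \<in> V" using inV assms(1) by blast
  ultimately show False using hpu h assms(1) p(2) \<open>p \<noteq> a\<close>
    by (auto simp: hybrid_parents_unconnected_def parents_def)
qed

lemma K:
  assumes "tree_node E a" "a \<in> V" "(a,v) \<in> (TE E)\<^sup>+" "cluster V E a \<subseteq> cluster V E v"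
  shows False
proof -
  obtain w1 where w1: "(a,w1) \<in> TE E" "(w1,v) \<in> (TE E)\<^sup>*" using tranclD assms(3) by metis
  have aw1: "(a,w1) \<in> E" using w1 by (auto simp: TE_def)
  have "\<not> is_leaf E a" using aw1 fin_children by (auto simp: is_leaf_def outdeg_def children_def)
  hence "outdeg E a \<noteq> 0" by (simp add: is_leaf_def)
  moreover have "outdeg E a \<noteq> 1" using net assms(1,2) by (auto simp: tree_child_network_def)
  ultimately have "card (children E a) \<ge> 2" by (simp add: outdeg_def)
  then obtain c where c: "c \<in> children E a" "c \<noteq> w1"
  proof -
    have "\<not> children E a \<subseteq> {w1}"
    proof
      assume "children E a \<subseteq> {w1}"
      hence "card (children E a) \<le> 1" using card_mono[of "{w1}" "children E a"] by simp
      thus False using \<open>card (children E a) \<ge> 2\<close> by simp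
    qed
    thus ?thesis using that by blast
  qed
  have ac: "(a,c) \<in> E" using c by (simp add: children_def)
  hence "c \<in> V" using inV by blast
  then obtain z where z: "z \<in> leaves V E" "(c,z) \<in> (TE E)\<^sup>*" using tp_leaf by blast
  have "(a,z) \<in> E\<^sup>*" using ac TE_rtrancl_sub[OF z(2)] by (meson converse_rtrancl_into_rtrancl)
  hence "z \<in> cluster V E v" using assms(4) z(1) by (auto simp: cluster_def)
  hence "(v,z) \<in> E\<^sup>*" by (simp add: cluster_def)
  from ancestor[OF z(2) this]
  have "(v,c) \<in> E\<^sup>* \<or> (c,v) \<in> (TE E)\<^sup>+" by blast
  thus False
  proof
    assume vc: "(v,c) \<in> E\<^sup>*"
    have "(w1,c) \<in> E\<^sup>*" using TE_rtrancl_sub[OF w1(2)] vc by simp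
    hence "(w1,c) \<in> E\<^sup>+" using c(2) by (metis rtranclD)
    thus False using no_shortcut[OF ac aw1] c(2) by blast
  next
    assume "(c,v) \<in> (TE E)\<^sup>+"
    hence "(c,v) \<in> (TE E)\<^sup>*" by simp
    from ancestor[OF this TE_rtrancl_sub[OF w1(2)]]
    have "(w1,c) \<in> E\<^sup>* \<or> (c,w1) \<in> E\<^sup>*" using TE_trancl_sub trancl_into_rtrancl by metis
    hence "(w1,c) \<in> E\<^sup>+ \<or> (c,w1) \<in> E\<^sup>+" using c(2) by (metis rtranclD)
    thus False using no_shortcut[OF ac aw1] no_shortcut[OF aw1 ac] c(2) by blast
  qed
qed

lemma single_child:
  assumes "children E u = {w}" shows "cluster V E u = cluster V E w"
proof -
  have uw: "(u,w) \<in> E" using assms by (auto simp: children_def)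
  have nl: "\<not> is_leaf E u" using assms by (simp add: is_leaf_def outdeg_def)
  have "(u,x) \<in> E\<^sup>* \<longleftrightarrow> (w,x) \<in> E\<^sup>*" if "x \<in> leaves V E" for x
  proof
    assume "(u,x) \<in> E\<^sup>*"
    moreover have "x \<noteq> u" using that nl by (auto simp: leaves_def)
    ultimately obtain y where "(u,y) \<in> E" "(y,x) \<in> E\<^sup>*" by (metis converse_rtranclE)
    moreover have "y = w" using assms calculation(1) by (auto simp: children_def)
    ultimately show "(w,x) \<in> E\<^sup>*" by simp
  next
    assume "(w,x) \<in> E\<^sup>*" thus "(u,x) \<in> E\<^sup>*" using uw by (meson converse_rtrancl_into_rtrancl)
  qed
  thus ?thesis by (auto simp: cluster_def)
qed

lemma M:
  assumes "u \<in> V" "(u,v) \<in> (TE E)\<^sup>+" "cluster V E u = cluster V E v"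
  shows "hybrid_node E u \<and> children E u = {v}"
proof -
  have "\<not> tree_node E u" using K[OF _ assms(1,2)] assms(3) by blast
  hence h: "hybrid_node E u" by (simp add: tree_node_def hybrid_node_def)
  hence "outdeg E u = 1" using net assms(1) by (auto simp: tree_child_network_def)
  then obtain w where w: "children E u = {w}" by (auto simp: outdeg_def card_1_singleton_iff)
  obtain w1 where w1: "(u,w1) \<in> TE E" "(w1,v) \<in> (TE E)\<^sup>*" using tranclD assms(2) by metis
  have "w1 = w" using w w1(1) by (auto simp: TE_def children_def)
  show ?thesis
  proof (cases "w = v")
    case True then show ?thesis using h w by simp
  next
    case False
    hence "(w,v) \<in> (TE E)\<^sup>+" using w1(2) \<open>w1 = w\<close> by (metis rtranclD)
    moreover have "tree_node E w" "w \<in> V" using w1(1) \<open>w1 = w\<close> inV by (auto simp: TE_def)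
    moreover have "cluster V E w = cluster V E v" using single_child[OF w] assms(3) by simp
    ultimately have False using K by blast
    thus ?thesis ..
  qed
qed

lemma main:
  assumes "u \<in> V" "v \<in> V"
  shows "cluster V E u = cluster V E v \<longleftrightarrow>
           (u = v \<or> (hybrid_node E u \<and> children E u = {v})
                  \<or> (hybrid_node E v \<and> children E v = {u}))"
proof
  assume eq: "cluster V E u = cluster V E v"
  show "u = v \<or> (hybrid_node E u \<and> children E u = {v}) \<or> (hybrid_node E v \<and> children E v = {u})"
  proof (cases "u = v")
    case False
    obtain x where x: "x \<in> leaves V E" "(u,x) \<in> (TE E)\<^sup>*" using tp_leaf assms(1) by blast
    have "x \<in> cluster V E u" using x TE_rtrancl_sub by (auto simp: cluster_def)
    hence "x \<in> cluster V E v" using eq by simp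
    hence "(v,x) \<in> E\<^sup>*" by (simp add: cluster_def)
    from ancestor[OF x(2) this] have A: "(v,u) \<in> E\<^sup>* \<or> (u,v) \<in> (TE E)\<^sup>+" by blast
    obtain y where y: "y \<in> leaves V E" "(v,y) \<in> (TE E)\<^sup>*" using tp_leaf assms(2) by blast
    have "y \<in> cluster V E v" using y TE_rtrancl_sub by (auto simp: cluster_def)
    hence "y \<in> cluster V E u" using eq by simp
    hence "(u,y) \<in> E\<^sup>*" by (simp add: cluster_def)
    from ancestor[OF y(2) this] have B: "(u,v) \<in> E\<^sup>* \<or> (v,u) \<in> (TE E)\<^sup>+" by blast
    have "(u,v) \<in> (TE E)\<^sup>+ \<or> (v,u) \<in> (TE E)\<^sup>+"
    proof (rule ccontr)
      assume "\<not> ?thesis"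
      hence "(v,u) \<in> E\<^sup>*" "(u,v) \<in> E\<^sup>*" using A B by auto
      hence "(u,v) \<in> E\<^sup>+" using False by (metis rtranclD)
      thus False using nocyc \<open>(v,u) \<in> E\<^sup>*\<close> by blast
    qed
    thus ?thesis using M assms eq by metis
  qed simp
next
  assume "u = v \<or> (hybrid_node E u \<and> children E u = {v}) \<or> (hybrid_node E v \<and> children E v = {u})"
  thus "cluster V E u = cluster V E v" using single_child by metis
qed

end

theorem lemma5:
  fixes V :: "'a set" and E :: "('a \<times> 'a) set" and lab :: "'a \<Rightarrow> 's" and S :: "'s set"
  assumes "tree_child_network V E lab S"
    and "hybrid_parents_unconnected V E"
    and "u \<in> V" and "v \<in> V"
  shows "cluster V E u = cluster V E v \<longleftrightarrow>
           (u = v \<or> (hybrid_node E u \<and> children E u = {v})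
                  \<or> (hybrid_node E v \<and> children E v = {u}))"
proof -
  interpret tcn V E lab S using assms(1,2) by unfold_locales
  show ?thesis using main assms(3,4) by blast
qed

end
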